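(* Let $T\in(\mathbb{C}^n)^{\otimes3}$ be an $r$-diagonalisable symmetric tensor, $T=\sum_{i=1}^ru_i^{\otimes3}$ with $u_1,\dots,u_r$ linearly independent. Let $P\in\mathbb{C}^{n\times r}$ be a semi-unitary matrix whose columns span $\mathrm{span}\{u_1,\dots,u_r\}$, and let $T'=(\overline P\otimes\overline P\otimes\overline P).T\in(\mathbb{C}^r)^{\otimes3}$. Then $T'$ is diagonalisable and $\kappa(T)=\kappa(T')$.
   Context: A symmetric tensor is $r$-diagonalisable if it equals $\sum_{i=1}^r u_i^{\otimes3}$ with the $u_i$ linearly independent (diagonalisable when $r$ equals the ambient dimension). $\kappa(T)=\|U\|_F^2+\|U^\dagger\|_F^2$, where $U$ has rows $u_1,\dots,u_r$ and $U^\dagger$ is the Moore–Penrose pseudoinverse; this does not depend on the decomposition. $P$ semi-unitary means $P^*P=I_r$; $\overline P$ is the entrywise complex conjugate. For $A\in\mathbb{C}^{n\times r}$, $\big((A\otimes A\otimes A).T\big)_{i_1i_2i_3}=\sum_{j_1,j_2,j_3}A_{j_1i_1}A_{j_2i_2}A_{j_3i_3}T_{j_1j_2j_3}$, so $(\overline P\otimes\overline P\otimes\overline P).(u^{\otimes3})=(P^*u)^{\otimes3}$. *)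

theory Defs
  imports Complex_Main "Jordan_Normal_Form.Matrix"
begin

definition ctrans :: "complex mat \<Rightarrow> complex mat" where
  "ctrans A = mat (dim_col A) (dim_row A) (\<lambda>(i,j). cnj (A $$ (j,i)))"

definition pinv :: "complex mat \<Rightarrow> complex mat" where
  "pinv A = (THE X. X \<in> carrier_mat (dim_col A) (dim_row A) \<and>
      A * X * A = A \<and> X * A * X = X \<and>
      ctrans (A * X) = A * X \<and> ctrans (X * A) = X * A)"

definition frob2 :: "complex mat \<Rightarrow> real" where
  "frob2 A = (\<Sum>i<dim_row A. \<Sum>j<dim_col A. (cmod (A $$ (i,j)))^2)"

text \<open>Order-3 tensors on C^n are functions of three indices; only indices < n matter.
  \<open>r_decomp n r T U\<close>: U is an r x n matrix whose rows u_1..u_r are linearly independent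
  and T = sum_i u_i^{\<otimes>3}.\<close>
definition r_decomp :: "nat \<Rightarrow> nat \<Rightarrow> (nat \<Rightarrow> nat \<Rightarrow> nat \<Rightarrow> complex) \<Rightarrow> complex mat \<Rightarrow> bool" where
  "r_decomp n r T U \<longleftrightarrow> U \<in> carrier_mat r n \<and>
     (\<forall>c::nat \<Rightarrow> complex. (\<forall>a<n. (\<Sum>i<r. c i * U $$ (i,a)) = 0) \<longrightarrow> (\<forall>i<r. c i = 0)) \<and>
     (\<forall>a<n. \<forall>b<n. \<forall>c<n. T a b c = (\<Sum>i<r. U $$ (i,a) * U $$ (i,b) * U $$ (i,c)))"

definition r_diagonalisable :: "nat \<Rightarrow> nat \<Rightarrow> (nat \<Rightarrow> nat \<Rightarrow> nat \<Rightarrow> complex) \<Rightarrow> bool" where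
  "r_diagonalisable n r T \<longleftrightarrow> (\<exists>U. r_decomp n r T U)"

definition diagonalisable :: "nat \<Rightarrow> (nat \<Rightarrow> nat \<Rightarrow> nat \<Rightarrow> complex) \<Rightarrow> bool" where
  "diagonalisable n T \<longleftrightarrow> r_diagonalisable n n T"

definition kappa :: "nat \<Rightarrow> (nat \<Rightarrow> nat \<Rightarrow> nat \<Rightarrow> complex) \<Rightarrow> real" where
  "kappa n T = (let U = (SOME U. \<exists>r. r_decomp n r T U) in frob2 U + frob2 (pinv U))"

text \<open>(A \<otimes> A \<otimes> A).T for A of size n x r.\<close>
definition tmul3 :: "complex mat \<Rightarrow> (nat \<Rightarrow> nat \<Rightarrow> nat \<Rightarrow> complex) \<Rightarrow> (nat \<Rightarrow> nat \<Rightarrow> nat \<Rightarrow> complex)" where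
  "tmul3 A T = (\<lambda>i1 i2 i3. \<Sum>j1<dim_row A. \<Sum>j2<dim_row A. \<Sum>j3<dim_row A.
      A $$ (j1,i1) * A $$ (j2,i2) * A $$ (j3,i3) * T j1 j2 j3)"

definition conj_mat :: "complex mat \<Rightarrow> complex mat" where
  "conj_mat A = map_mat cnj A"

end

theory Submission
  imports Defs "Jordan_Normal_Form.Determinant"
begin

lemma ctrans_carrier[simp]: "ctrans A \<in> carrier_mat (dim_col A) (dim_row A)"
  unfolding ctrans_def by auto
lemma ctrans_dims[simp]: "dim_row (ctrans A) = dim_col A" "dim_col (ctrans A) = dim_row A"
  unfolding ctrans_def by auto
lemma ctrans_index[simp]: "i < dim_col A \<Longrightarrow> j < dim_row A \<Longrightarrow> ctrans A $$ (i,j) = cnj (A $$ (j,i))"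
  unfolding ctrans_def by auto
lemma ctrans_ctrans[simp]: "ctrans (ctrans A) = A"
  by (rule eq_matI) auto
lemma ctrans_one[simp]: "ctrans (1\<^sub>m n) = 1\<^sub>m n"
  by (rule eq_matI) auto
lemma ctrans_mult: assumes "A \<in> carrier_mat n m" "B \<in> carrier_mat m k"
  shows "ctrans (A * B) = ctrans B * ctrans A"
  using assms
  by (intro eq_matI) (auto simp: scalar_prod_def cnj_sum mult.commute intro!: sum.cong)

lemma massoc: "dim_col A = dim_row B \<Longrightarrow> dim_col B = dim_row C \<Longrightarrow> A * B * C = A * (B * C)"
  by (rule assoc_mult_mat[OF carrier_mat_triv _ carrier_mat_triv]) auto

definition pen :: "complex mat \<Rightarrow> complex mat \<Rightarrow> bool" where
  "pen A X \<longleftrightarrow> X \<in> carrier_mat (dim_col A) (dim_row A) \<and> A * X * A = A \<and> X * A * X = X \<and>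
      ctrans (A * X) = A * X \<and> ctrans (X * A) = X * A"

lemma pen_unique: assumes A: "A \<in> carrier_mat m n" and X: "pen A X" and Y: "pen A Y"
  shows "X = Y"
proof -
  have Xc: "X \<in> carrier_mat n m" and Yc: "Y \<in> carrier_mat n m" using X Y A unfolding pen_def by auto
  note XX = X[unfolded pen_def] and YY = Y[unfolded pen_def]
  have AX: "A * X \<in> carrier_mat m m" "A * Y \<in> carrier_mat m m" "X * A \<in> carrier_mat n n" "Y * A \<in> carrier_mat n n"
    using A Xc Yc by auto
  have "A * X = (A * Y * A) * X" using YY by simp
  also have "\<dots> = (A * Y) * (A * X)" using A Xc Yc by (simp add: massoc)
  also have "\<dots> = ctrans (A * Y) * ctrans (A * X)" using XX YY by simp
  also have "\<dots> = ctrans ((A * X) * (A * Y))" using AX by (simp add: ctrans_mult[of _ m m _ m])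
  also have "(A * X) * (A * Y) = (A * X * A) * Y" using A Xc Yc by (simp add: massoc)
  also have "\<dots> = A * Y" using XX by simp
  finally have 1: "A * X = A * Y" using YY by simp
  have "X * A = X * (A * Y * A)" using YY by simp
  also have "\<dots> = (X * A) * (Y * A)" using A Xc Yc by (simp add: massoc)
  also have "\<dots> = ctrans (X * A) * ctrans (Y * A)" using XX YY by simp
  also have "\<dots> = ctrans ((Y * A) * (X * A))" using AX by (simp add: ctrans_mult[of _ n n _ n])
  also have "(Y * A) * (X * A) = Y * (A * X * A)" using A Xc Yc by (simp add: massoc)
  also have "\<dots> = Y * A" using XX by simp
  finally have 2: "X * A = Y * A" using YY by simp
  have "X = X * A * X" using XX by simp
  also have "\<dots> = X * (A * Y)" using 1 A Xc Yc by (simp add: massoc)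
  also have "\<dots> = (X * A) * Y" using A Xc Yc by (simp add: massoc)
  also have "\<dots> = (Y * A) * Y" using 2 by simp
  also have "\<dots> = Y" using YY by simp
  finally show ?thesis .
qed

lemma pinv_eq: assumes A: "A \<in> carrier_mat m n" and X: "pen A X" shows "pinv A = X"
  unfolding pinv_def
  apply (rule the_equality)
  using X apply (simp add: pen_def)
  using pen_unique[OF A X] unfolding pen_def by blast

definition indep :: "nat \<Rightarrow> nat \<Rightarrow> complex mat \<Rightarrow> bool" where
  "indep r n U \<longleftrightarrow> (\<forall>c::nat \<Rightarrow> complex. (\<forall>a<n. (\<Sum>i<r. c i * U $$ (i,a)) = 0) \<longrightarrow> (\<forall>i<r. c i = 0))"

lemma gram_inj: assumes U: "U \<in> carrier_mat r n" and ind: "indep r n U"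
  and v: "v \<in> carrier_vec r" and Gv: "(U * ctrans U) *\<^sub>v v = 0\<^sub>v r"
  shows "v = 0\<^sub>v r"
proof -
  define w where "w = ctrans U *\<^sub>v v"
  have w: "w \<in> carrier_vec n" unfolding w_def using U by (intro carrier_vecI) simp
  have Uc: "ctrans U \<in> carrier_mat n r" using U by auto
  have "(U * ctrans U) *\<^sub>v v = U *\<^sub>v w" unfolding w_def
    by (rule assoc_mult_mat_vec[OF U Uc v])
  with Gv have Uw: "U *\<^sub>v w = 0\<^sub>v r" by simp
  have "0 = (\<Sum>i<r. cnj (v $ i) * (U *\<^sub>v w) $ i)" using Uw by simp
  also have "\<dots> = (\<Sum>i<r. cnj (v $ i) * (\<Sum>a<n. U $$ (i,a) * w $ a))"
    using U w by (auto simp: scalar_prod_def lessThan_atLeast0 intro!: sum.cong)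
  also have "\<dots> = (\<Sum>i<r. \<Sum>a<n. cnj (v $ i) * (U $$ (i,a) * w $ a))"
    by (simp only: sum_distrib_left)
  also have "\<dots> = (\<Sum>a<n. \<Sum>i<r. cnj (v $ i) * (U $$ (i,a) * w $ a))"
    by (rule sum.swap)
  also have "\<dots> = (\<Sum>a<n. w $ a * (\<Sum>i<r. cnj (v $ i) * U $$ (i,a)))"
    by (simp only: sum_distrib_left) (simp add: mult_ac)
  also have "\<dots> = (\<Sum>a<n. w $ a * cnj (w $ a))"
  proof (rule sum.cong)
    fix a assume a: "a \<in> {..<n}"
    have "w $ a = (\<Sum>i<r. cnj (U $$ (i,a)) * v $ i)" unfolding w_def using U v a
      by (auto simp: scalar_prod_def lessThan_atLeast0 intro!: sum.cong)
    then show "w $ a * (\<Sum>i<r. cnj (v $ i) * U $$ (i,a)) = w $ a * cnj (w $ a)"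
      by (simp add: cnj_sum mult.commute)
  qed simp
  also have "\<dots> = (\<Sum>a<n. complex_of_real ((cmod (w $ a))^2))"
    by (intro sum.cong refl) (simp only: complex_norm_square)
  also have "\<dots> = of_real (\<Sum>a<n. (cmod (w $ a))^2)"
    by (simp only: of_real_sum)
  finally have "(\<Sum>a<n. (cmod (w $ a))^2) = 0" by (metis of_real_eq_0_iff)
  hence w0: "\<forall>a<n. w $ a = 0" by (simp add: sum_nonneg_eq_0_iff)
  have "\<forall>a<n. (\<Sum>i<r. cnj (v $ i) * U $$ (i,a)) = 0"
  proof (intro allI impI)
    fix a assume a: "a < n"
    have "w $ a = (\<Sum>i<r. cnj (U $$ (i,a)) * v $ i)" unfolding w_def using U v a
      by (auto simp: scalar_prod_def lessThan_atLeast0 intro!: sum.cong)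
    with w0 a have "cnj (\<Sum>i<r. cnj (U $$ (i,a)) * v $ i) = 0" by simp
    thus "(\<Sum>i<r. cnj (v $ i) * U $$ (i,a)) = 0" by (simp add: cnj_sum mult.commute)
  qed
  hence "\<forall>i<r. cnj (v $ i) = 0"
    using ind[unfolded indep_def, THEN spec[where x="\<lambda>i. cnj (v $ i)"]] by simp
  thus ?thesis using v by (auto intro!: eq_vecI)
qed

lemma full_row_pinv: assumes U: "U \<in> carrier_mat r n" and ind: "indep r n U"
  shows "\<exists>X. pen U X \<and> U * X = 1\<^sub>m r"
proof -
  define G where "G = U * ctrans U"
  have G: "G \<in> carrier_mat r r" unfolding G_def using U by auto
  have Uc: "ctrans U \<in> carrier_mat n r" using U by auto
  have GH: "ctrans G = G" unfolding G_def using ctrans_mult[OF U Uc] by simp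
  have "det G \<noteq> 0"
    using det_0_iff_vec_prod_zero[OF G] gram_inj[OF U ind] unfolding G_def by blast
  from det_non_zero_imp_unit[OF G this, of "()"]
  obtain B where B: "B \<in> carrier_mat r r" "B * G = 1\<^sub>m r" "G * B = 1\<^sub>m r"
    unfolding Units_def ring_mat_def by auto
  have BH: "ctrans B = B"
  proof -
    have "ctrans B * G = 1\<^sub>m r" using B G GH ctrans_mult[OF G B(1)] by simp
    hence "ctrans B = ctrans B * (G * B)" using B by simp
    also have "\<dots> = (ctrans B * G) * B" using B G by (simp add: massoc)
    also have "\<dots> = B" using \<open>ctrans B * G = 1\<^sub>m r\<close> B by simp
    finally show ?thesis .
  qed
  define X where "X = ctrans U * B"
  have Xc: "X \<in> carrier_mat n r" unfolding X_def using U B by auto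
  have "U * X = (U * ctrans U) * B" unfolding X_def using U Uc B by (simp add: massoc)
  also have "\<dots> = 1\<^sub>m r" using B(3) unfolding G_def .
  finally have UX: "U * X = 1\<^sub>m r" .
  have "pen U X" unfolding pen_def
  proof (intro conjI)
    show "X \<in> carrier_mat (dim_col U) (dim_row U)" using Xc U by auto
    show "U * X * U = U" using UX U by simp
    show "X * U * X = X" using UX U Xc by (simp add: massoc)
    show "ctrans (U * X) = U * X" using UX by simp
    show "ctrans (X * U) = X * U"
    proof -
      have "X * U = ctrans U * (B * U)" unfolding X_def using U B by (simp add: massoc)
      moreover have "ctrans (ctrans U * (B * U)) = ctrans U * (B * U)"
      proof -
        have BU: "B * U \<in> carrier_mat r n" using B U by auto
        have "ctrans (ctrans U * (B * U)) = ctrans (B * U) * U" using ctrans_mult[OF Uc BU] by simp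
        also have "ctrans (B * U) = ctrans U * B" using ctrans_mult[OF B(1) U] BH by simp
        finally show ?thesis using U B Uc by (simp add: massoc)
      qed
      ultimately show ?thesis by simp
    qed
  qed
  with UX show ?thesis by blast
qed

lemma swap2: "(\<Sum>a\<in>A. \<Sum>b\<in>B. \<Sum>i\<in>I. F a b i) = (\<Sum>i\<in>I. \<Sum>a\<in>A. \<Sum>b\<in>B. F a b i)"
proof -
  have "(\<Sum>a\<in>A. \<Sum>b\<in>B. \<Sum>i\<in>I. F a b i) = (\<Sum>a\<in>A. \<Sum>i\<in>I. \<Sum>b\<in>B. F a b i)"
    by (rule sum.cong[OF refl], rule sum.swap)
  also have "\<dots> = (\<Sum>i\<in>I. \<Sum>a\<in>A. \<Sum>b\<in>B. F a b i)" by (rule sum.swap)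
  finally show ?thesis .
qed

lemma swap3: "(\<Sum>a\<in>A. \<Sum>b\<in>B. \<Sum>c\<in>C. \<Sum>i\<in>I. F a b c i) = (\<Sum>i\<in>I. \<Sum>a\<in>A. \<Sum>b\<in>B. \<Sum>c\<in>C. F a b c i)"
proof -
  have "(\<Sum>a\<in>A. \<Sum>b\<in>B. \<Sum>c\<in>C. \<Sum>i\<in>I. F a b c i) = (\<Sum>a\<in>A. \<Sum>i\<in>I. \<Sum>b\<in>B. \<Sum>c\<in>C. F a b c i)"
    by (rule sum.cong[OF refl], rule swap2)
  also have "\<dots> = (\<Sum>i\<in>I. \<Sum>a\<in>A. \<Sum>b\<in>B. \<Sum>c\<in>C. F a b c i)" by (rule sum.swap)
  finally show ?thesis .
qed

lemma prod2: fixes f :: "'a \<Rightarrow> complex" and g :: "'b \<Rightarrow> complex"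
  shows "(\<Sum>a\<in>A. f a) * (\<Sum>b\<in>B. g b) * c = (\<Sum>a\<in>A. \<Sum>b\<in>B. f a * g b * c)"
proof -
  have "(\<Sum>a\<in>A. f a) * (\<Sum>b\<in>B. g b) = (\<Sum>a\<in>A. \<Sum>b\<in>B. f a * g b)" by (rule sum_product)
  hence "(\<Sum>a\<in>A. f a) * (\<Sum>b\<in>B. g b) * c = (\<Sum>a\<in>A. \<Sum>b\<in>B. f a * g b) * c" by simp
  also have "\<dots> = (\<Sum>a\<in>A. \<Sum>b\<in>B. f a * g b * c)" by (simp only: sum_distrib_right)
  finally show ?thesis .
qed
lemma prod3: fixes f :: "'a \<Rightarrow> complex" and g :: "'b \<Rightarrow> complex" and h :: "'c \<Rightarrow> complex"
  shows "(\<Sum>a\<in>A. f a) * (\<Sum>b\<in>B. g b) * (\<Sum>c\<in>C. h c) = (\<Sum>a\<in>A. \<Sum>b\<in>B. \<Sum>c\<in>C. f a * g b * h c)"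
proof -
  have "(\<Sum>a\<in>A. f a) * (\<Sum>b\<in>B. g b) * (\<Sum>c\<in>C. h c) = (\<Sum>a\<in>A. \<Sum>b\<in>B. f a * g b * (\<Sum>c\<in>C. h c))"
    by (rule prod2)
  also have "\<dots> = (\<Sum>a\<in>A. \<Sum>b\<in>B. \<Sum>c\<in>C. f a * g b * h c)" by (simp only: sum_distrib_left)
  finally show ?thesis .
qed
lemma contr2: fixes T :: "nat \<Rightarrow> nat \<Rightarrow> complex" assumes "\<forall>a<n. \<forall>b<n. T a b = (\<Sum>i<r. f i a * f i b * g i)"
  shows "(\<Sum>a<n. \<Sum>b<n. x a * y b * T a b) = (\<Sum>i<r. (\<Sum>a<n. x a * f i a) * (\<Sum>b<n. y b * f i b) * g i)"
proof -
  have "(\<Sum>a<n. \<Sum>b<n. x a * y b * T a b) = (\<Sum>a<n. \<Sum>b<n. x a * y b * (\<Sum>i<r. f i a * f i b * g i))"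
    using assms by (auto intro!: sum.cong)
  also have "\<dots> = (\<Sum>a<n. \<Sum>b<n. \<Sum>i<r. x a * y b * (f i a * f i b * g i))"
    by (simp only: sum_distrib_left)
  also have "\<dots> = (\<Sum>i<r. \<Sum>a<n. \<Sum>b<n. x a * y b * (f i a * f i b * g i))"
    by (rule swap2)
  also have "\<dots> = (\<Sum>i<r. (\<Sum>a<n. x a * f i a) * (\<Sum>b<n. y b * f i b) * g i)"
    by (rule sum.cong[OF refl], subst prod2, simp add: mult_ac)
  finally show ?thesis .
qed

lemma contr3: fixes T :: "nat \<Rightarrow> nat \<Rightarrow> nat \<Rightarrow> complex" assumes "\<forall>a<n. \<forall>b<n. \<forall>c<n. T a b c = (\<Sum>i<r. f i a * f i b * f i c)"
  shows "(\<Sum>a<n. \<Sum>b<n. \<Sum>c<n. x a * y b * z c * T a b c) = (\<Sum>i<r. (\<Sum>a<n. x a * f i a) * (\<Sum>b<n. y b * f i b) * (\<Sum>c<n. z c * f i c))"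
proof -
  have "(\<Sum>a<n. \<Sum>b<n. \<Sum>c<n. x a * y b * z c * T a b c) = (\<Sum>a<n. \<Sum>b<n. \<Sum>c<n. x a * y b * z c * (\<Sum>i<r. f i a * f i b * f i c))"
    using assms by (auto intro!: sum.cong)
  also have "\<dots> = (\<Sum>a<n. \<Sum>b<n. \<Sum>c<n. \<Sum>i<r. x a * y b * z c * (f i a * f i b * f i c))"
    by (simp only: sum_distrib_left)
  also have "\<dots> = (\<Sum>i<r. \<Sum>a<n. \<Sum>b<n. \<Sum>c<n. x a * y b * z c * (f i a * f i b * f i c))"
    by (rule swap3)
  also have "\<dots> = (\<Sum>i<r. (\<Sum>a<n. x a * f i a) * (\<Sum>b<n. y b * f i b) * (\<Sum>c<n. z c * f i c))"
    by (rule sum.cong[OF refl], subst prod3, simp add: mult_ac)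
  finally show ?thesis .
qed

lemma mult_one_sum: assumes U: "U \<in> carrier_mat r n" and X: "X \<in> carrier_mat n r" and UX: "U * X = 1\<^sub>m r"
  shows "\<forall>i<r. \<forall>k<r. (\<Sum>a<n. U $$ (i,a) * X $$ (a,k)) = (if i = k then 1 else 0)"
proof (intro allI impI)
  fix i k assume i: "i < r" and k: "k < r"
  have "(U * X) $$ (i,k) = (\<Sum>a<n. U $$ (i,a) * X $$ (a,k))"
    using U X i k by (auto simp: scalar_prod_def lessThan_atLeast0 intro!: sum.cong)
  thus "(\<Sum>a<n. U $$ (i,a) * X $$ (a,k)) = (if i = k then 1 else 0)" using UX i k by simp
qed

lemma half:
  fixes U X V :: "complex mat" and T :: "nat \<Rightarrow> nat \<Rightarrow> nat \<Rightarrow> complex"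
  assumes U: "U \<in> carrier_mat r n" and X: "X \<in> carrier_mat n r" and UX: "U * X = 1\<^sub>m r"
    and TU: "\<forall>a<n. \<forall>b<n. \<forall>c<n. T a b c = (\<Sum>i<r. U $$ (i,a) * U $$ (i,b) * U $$ (i,c))"
    and TV: "\<forall>a<n. \<forall>b<n. \<forall>c<n. T a b c = (\<Sum>i<r'. V $$ (i,a) * V $$ (i,b) * V $$ (i,c))"
  shows "\<forall>k<r. \<forall>c<n. U $$ (k,c) = (\<Sum>j<r'. (\<Sum>a<n. V $$ (j,a) * X $$ (a,k))^2 * V $$ (j,c))"
    and "\<forall>k<r. (\<Sum>j<r'. (\<Sum>a<n. V $$ (j,a) * X $$ (a,k))^3) = 1"
proof -
  note d = mult_one_sum[OF U X UX]
  have dk: "(\<Sum>a<n. X $$ (a,k) * U $$ (i,a)) = (if i = k then 1 else 0)" if "i < r" "k < r" for i k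
  proof -
    have "(\<Sum>a<n. X $$ (a,k) * U $$ (i,a)) = (\<Sum>a<n. U $$ (i,a) * X $$ (a,k))"
      by (rule sum.cong) (rule refl, rule mult.commute)
    thus ?thesis using d that by simp
  qed
  have mk: "(\<Sum>a<n. X $$ (a,k) * V $$ (j,a)) = (\<Sum>a<n. V $$ (j,a) * X $$ (a,k))" for j k
    by (simp add: mult.commute)
  show "\<forall>k<r. \<forall>c<n. U $$ (k,c) = (\<Sum>j<r'. (\<Sum>a<n. V $$ (j,a) * X $$ (a,k))^2 * V $$ (j,c))"
  proof (intro allI impI)
    fix k c assume k: "k < r" and c: "c < n"
    let ?S = "\<Sum>a<n. \<Sum>b<n. X $$ (a,k) * X $$ (b,k) * T a b c"
    have "?S = (\<Sum>i<r. (\<Sum>a<n. X $$ (a,k) * U $$ (i,a)) * (\<Sum>b<n. X $$ (b,k) * U $$ (i,b)) * U $$ (i,c))"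
      by (rule contr2) (use TU c in auto)
    also have "\<dots> = (\<Sum>i<r. (if i = k then U $$ (i,c) else 0))"
      by (rule sum.cong) (use dk k in auto)
    also have "\<dots> = U $$ (k,c)" using k by simp
    finally have 1: "?S = U $$ (k,c)" .
    have "?S = (\<Sum>i<r'. (\<Sum>a<n. X $$ (a,k) * V $$ (i,a)) * (\<Sum>b<n. X $$ (b,k) * V $$ (i,b)) * V $$ (i,c))"
      by (rule contr2) (use TV c in auto)
    also have "\<dots> = (\<Sum>j<r'. (\<Sum>a<n. V $$ (j,a) * X $$ (a,k))^2 * V $$ (j,c))"
      by (simp add: mk power2_eq_square)
    finally show "U $$ (k,c) = (\<Sum>j<r'. (\<Sum>a<n. V $$ (j,a) * X $$ (a,k))^2 * V $$ (j,c))" using 1 by simp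
  qed
  show "\<forall>k<r. (\<Sum>j<r'. (\<Sum>a<n. V $$ (j,a) * X $$ (a,k))^3) = 1"
  proof (intro allI impI)
    fix k assume k: "k < r"
    let ?S = "\<Sum>a<n. \<Sum>b<n. \<Sum>c<n. X $$ (a,k) * X $$ (b,k) * X $$ (c,k) * T a b c"
    have "?S = (\<Sum>i<r. (\<Sum>a<n. X $$ (a,k) * U $$ (i,a)) * (\<Sum>b<n. X $$ (b,k) * U $$ (i,b)) * (\<Sum>c<n. X $$ (c,k) * U $$ (i,c)))"
      by (rule contr3) (use TU in auto)
    also have "\<dots> = (\<Sum>i<r. (if i = k then 1 else 0))"
      by (rule sum.cong) (use dk k in auto)
    also have "\<dots> = 1" using k by simp
    finally have 1: "?S = 1" .
    have "?S = (\<Sum>i<r'. (\<Sum>a<n. X $$ (a,k) * V $$ (i,a)) * (\<Sum>b<n. X $$ (b,k) * V $$ (i,b)) * (\<Sum>c<n. X $$ (c,k) * V $$ (i,c)))"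
      by (rule contr3) (use TV in auto)
    also have "\<dots> = (\<Sum>j<r'. (\<Sum>a<n. V $$ (j,a) * X $$ (a,k))^3)"
      by (simp add: mk power3_eq_cube)
    finally show "(\<Sum>j<r'. (\<Sum>a<n. V $$ (j,a) * X $$ (a,k))^3) = 1" using 1 by simp
  qed
qed

lemma quart_cases: fixes z :: complex assumes "z^4 = z" shows "z = 0 \<or> z^3 = 1"
proof -
  have "z * (z^3 - 1) = 0" using assms by (simp add: algebra_simps power_numeral_reduce)
  thus ?thesis by auto
qed

lemma quart_cnj: fixes z :: complex assumes "z^4 = z" shows "cnj z * z = z^3"
proof (cases "z = 0")
  case False
  with quart_cases[OF assms] have z3: "z^3 = 1" by auto
  hence "cmod z ^ 3 = 1" by (metis norm_one norm_power)
  hence "cmod z = 1" by (metis norm_ge_zero power_eq_iff_eq_base power_one zero_less_numeral zero_le_one)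
  hence "cnj z * z = 1" by (metis complex_mult_cnj complex_norm_square mult.commute of_real_1 power_one)
  with z3 show ?thesis by simp
qed simp

lemma quart_six: fixes z :: complex assumes "z^4 = z" shows "z^6 = (if z \<noteq> 0 then 1 else 0)"
proof (cases "z = 0")
  case False
  with quart_cases[OF assms] have z3: "z^3 = 1" by auto
  have "z^6 = (z^3)^2" by (simp add: power_mult[symmetric])
  with z3 False show ?thesis by simp
qed simp

lemma count_one: fixes f :: "nat \<Rightarrow> complex"
  assumes "(\<Sum>k<r. if f k \<noteq> 0 then 1 else (0::complex)) = 1" "k < r" "l < r" "k \<noteq> l"
  shows "f k = 0 \<or> f l = 0"
proof (rule ccontr)
  assume "\<not> ?thesis"
  hence kl: "k \<in> {k\<in>{..<r}. f k \<noteq> 0}" "l \<in> {k\<in>{..<r}. f k \<noteq> 0}" using assms by auto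
  have "(\<Sum>k<r. if f k \<noteq> 0 then 1 else (0::complex)) = (\<Sum>k\<in>{k\<in>{..<r}. f k \<noteq> 0}. 1)"
    using sum.inter_filter[of "{..<r}" "\<lambda>_. (1::complex)" "\<lambda>k. f k \<noteq> 0"] by simp
  also have "\<dots> = of_nat (card {k\<in>{..<r}. f k \<noteq> 0})" by simp
  finally have "complex_of_nat (card {k\<in>{..<r}. f k \<noteq> 0}) = 1" using assms(1) by simp
  hence "card {k\<in>{..<r}. f k \<noteq> 0} = 1" by (simp only: of_nat_eq_1_iff)
  then obtain x where x: "{k\<in>{..<r}. f k \<noteq> 0} = {x}" by (rule card_1_singletonE)
  have "k \<in> {x}" "l \<in> {x}" using kl unfolding x by simp_all
  then show False using assms(4) by simp
qed

lemma scalar_unitary: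
  fixes m :: "nat \<Rightarrow> nat \<Rightarrow> complex"
  assumes q: "\<And>j k. j < r' \<Longrightarrow> k < r \<Longrightarrow> (m j k)^4 = m j k"
    and col: "\<And>k. k < r \<Longrightarrow> (\<Sum>j<r'. (m j k)^3) = 1"
    and row: "\<And>j. j < r' \<Longrightarrow> (\<Sum>k<r. (m j k)^6) = 1"
    and k: "k < r" and l: "l < r"
  shows "(\<Sum>j<r'. cnj (m j k) * m j l) = (if k = l then 1 else 0)"
proof (cases "k = l")
  case True
  have "(\<Sum>j<r'. cnj (m j k) * m j l) = (\<Sum>j<r'. (m j k)^3)"
    using True q k by (intro sum.cong) (auto simp: quart_cnj)
  with col k True show ?thesis by simp
next
  case False
  have "(\<Sum>j<r'. cnj (m j k) * m j l) = (\<Sum>j<r'. 0)"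
  proof (rule sum.cong)
    fix j assume j: "j \<in> {..<r'}"
    have "(\<Sum>k<r. if m j k \<noteq> 0 then 1 else (0::complex)) = (\<Sum>k<r. (m j k)^6)"
      by (rule sum.cong) (use quart_six q j in auto)
    hence "(\<Sum>k<r. if m j k \<noteq> 0 then 1 else (0::complex)) = 1" using row[of j] j by simp
    from count_one[OF this k l False] show "cnj (m j k) * m j l = 0" by auto
  qed simp
  with False show ?thesis by simp
qed

lemma decomp_unique:
  assumes U: "U \<in> carrier_mat r n" and iU: "indep r n U"
    and V: "V \<in> carrier_mat r' n" and iV: "indep r' n V"
    and TU: "\<forall>a<n. \<forall>b<n. \<forall>c<n. T a b c = (\<Sum>i<r. U $$ (i,a) * U $$ (i,b) * U $$ (i,c))"
    and TV: "\<forall>a<n. \<forall>b<n. \<forall>c<n. T a b c = (\<Sum>i<r'. V $$ (i,a) * V $$ (i,b) * V $$ (i,c))"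
  shows "\<exists>M. M \<in> carrier_mat r' r \<and> V = M * U \<and> ctrans M * M = 1\<^sub>m r"
proof -
  obtain X where X: "pen U X" "U * X = 1\<^sub>m r" using full_row_pinv[OF U iU] by blast
  obtain Y where Y: "pen V Y" "V * Y = 1\<^sub>m r'" using full_row_pinv[OF V iV] by blast
  have Xc: "X \<in> carrier_mat n r" using X U unfolding pen_def by auto
  have Yc: "Y \<in> carrier_mat n r'" using Y V unfolding pen_def by auto
  define m where "m j k = (\<Sum>a<n. V $$ (j,a) * X $$ (a,k))" for j k
  define p where "p k j = (\<Sum>a<n. U $$ (k,a) * Y $$ (a,j))" for k j
  note H1 = half(1)[OF U Xc X(2) TU TV, folded m_def]
  note H2 = half(2)[OF U Xc X(2) TU TV, folded m_def]
  note H3 = half(1)[OF V Yc Y(2) TV TU, folded p_def]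
  note H4 = half(2)[OF V Yc Y(2) TV TU, folded p_def]
  note dU = mult_one_sum[OF U Xc X(2)]
  note dV = mult_one_sum[OF V Yc Y(2)]
  have pm: "p k j = (m j k)^2" if k: "k < r" and j: "j < r'" for k j
  proof -
    have "p k j = (\<Sum>a<n. (\<Sum>l<r'. (m l k)^2 * V $$ (l,a)) * Y $$ (a,j))"
      unfolding p_def using H1 k by (intro sum.cong) auto
    also have "\<dots> = (\<Sum>a<n. \<Sum>l<r'. (m l k)^2 * V $$ (l,a) * Y $$ (a,j))"
      by (simp only: sum_distrib_right)
    also have "\<dots> = (\<Sum>l<r'. \<Sum>a<n. (m l k)^2 * V $$ (l,a) * Y $$ (a,j))"
      by (rule sum.swap)
    also have "\<dots> = (\<Sum>l<r'. (m l k)^2 * (\<Sum>a<n. V $$ (l,a) * Y $$ (a,j)))"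
      by (simp only: sum_distrib_left mult.assoc)
    also have "\<dots> = (\<Sum>l<r'. if l = j then (m l k)^2 else 0)"
      using dV j by (intro sum.cong) auto
    also have "\<dots> = (m j k)^2" using j by simp
    finally show ?thesis .
  qed
  have mp: "m j k = (p k j)^2" if k: "k < r" and j: "j < r'" for k j
  proof -
    have "m j k = (\<Sum>a<n. (\<Sum>l<r. (p l j)^2 * U $$ (l,a)) * X $$ (a,k))"
      unfolding m_def using H3 j by (intro sum.cong) auto
    also have "\<dots> = (\<Sum>a<n. \<Sum>l<r. (p l j)^2 * U $$ (l,a) * X $$ (a,k))"
      by (simp only: sum_distrib_right)
    also have "\<dots> = (\<Sum>l<r. \<Sum>a<n. (p l j)^2 * U $$ (l,a) * X $$ (a,k))"
      by (rule sum.swap)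
    also have "\<dots> = (\<Sum>l<r. (p l j)^2 * (\<Sum>a<n. U $$ (l,a) * X $$ (a,k)))"
      by (simp only: sum_distrib_left mult.assoc)
    also have "\<dots> = (\<Sum>l<r. if l = k then (p l j)^2 else 0)"
      using dU k by (intro sum.cong) auto
    also have "\<dots> = (p k j)^2" using k by simp
    finally show ?thesis .
  qed
  have q: "(m j k)^4 = m j k" if "j < r'" "k < r" for j k
  proof -
    have "(m j k)^4 = ((m j k)^2)^2" by (simp add: power_mult[symmetric])
    also have "\<dots> = m j k" using pm[OF that(2,1)] mp[OF that(2,1)] by simp
    finally show ?thesis .
  qed
  have row: "(\<Sum>k<r. (m j k)^6) = 1" if j: "j < r'" for j
  proof -
    have "(\<Sum>k<r. (m j k)^6) = (\<Sum>k<r. (p k j)^3)"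
      using pm j by (intro sum.cong) (auto simp: power_mult[symmetric])
    with H4 j show ?thesis by simp
  qed
  define M where "M = mat r' r (\<lambda>(j,k). m j k)"
  have Mc: "M \<in> carrier_mat r' r" unfolding M_def by auto
  have "V = M * U"
  proof (rule eq_matI)
    fix j c assume j: "j < dim_row (M * U)" and c: "c < dim_col (M * U)"
    hence j: "j < r'" and c: "c < n" using Mc U by auto
    have "(M * U) $$ (j,c) = (\<Sum>k<r. m j k * U $$ (k,c))"
      using j c U unfolding M_def by (auto simp: scalar_prod_def lessThan_atLeast0 intro!: sum.cong)
    also have "\<dots> = V $$ (j,c)" using H3 j c mp by (auto intro!: sum.cong)
    finally show "V $$ (j,c) = (M * U) $$ (j,c)" by simp
  qed (use Mc U V in auto)
  moreover have "ctrans M * M = 1\<^sub>m r"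
  proof (rule eq_matI)
    fix k l assume "k < dim_row (1\<^sub>m r)" "l < dim_col (1\<^sub>m r)"
    hence k: "k < r" and l: "l < r" by auto
    have "(ctrans M * M) $$ (k,l) = (\<Sum>j<r'. cnj (m j k) * m j l)"
      using k l Mc unfolding M_def by (auto simp: scalar_prod_def lessThan_atLeast0 intro!: sum.cong)
    also have "\<dots> = (if k = l then 1 else 0)"
      by (rule scalar_unitary[OF q H2[rule_format] row k l])
    finally show "(ctrans M * M) $$ (k,l) = 1\<^sub>m r $$ (k,l)" using k l by simp
  qed (use Mc in auto)
  ultimately show ?thesis using Mc by blast
qed

definition tr :: "complex mat \<Rightarrow> complex" where
  "tr A = (\<Sum>i<dim_row A. A $$ (i,i))"

lemma tr_comm: assumes A: "A \<in> carrier_mat m n" and B: "B \<in> carrier_mat n m"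
  shows "tr (A * B) = tr (B * A)"
proof -
  have "tr (A * B) = (\<Sum>i<m. \<Sum>k<n. A $$ (i,k) * B $$ (k,i))"
    unfolding tr_def using A B by (auto simp: scalar_prod_def lessThan_atLeast0 intro!: sum.cong)
  also have "\<dots> = (\<Sum>k<n. \<Sum>i<m. B $$ (k,i) * A $$ (i,k))"
    by (subst sum.swap) (simp add: mult.commute)
  also have "\<dots> = tr (B * A)"
    unfolding tr_def using A B by (auto simp: scalar_prod_def lessThan_atLeast0 intro!: sum.cong)
  finally show ?thesis .
qed

lemma frob2_tr: assumes A: "A \<in> carrier_mat m n"
  shows "complex_of_real (frob2 A) = tr (ctrans A * A)"
proof -
  have "complex_of_real (frob2 A) = (\<Sum>i<m. \<Sum>j<n. complex_of_real ((cmod (A $$ (i,j)))^2))"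
    unfolding frob2_def using A by (simp only: of_real_sum carrier_matD)
  also have "\<dots> = (\<Sum>i<m. \<Sum>j<n. cnj (A $$ (i,j)) * A $$ (i,j))"
    by (intro sum.cong refl) (simp only: complex_norm_square mult.commute)
  also have "\<dots> = (\<Sum>j<n. \<Sum>i<m. cnj (A $$ (i,j)) * A $$ (i,j))"
    by (rule sum.swap)
  also have "\<dots> = tr (ctrans A * A)"
    unfolding tr_def using A by (auto simp: scalar_prod_def lessThan_atLeast0 intro!: sum.cong)
  finally show ?thesis .
qed

lemma frob_left: assumes Q: "Q \<in> carrier_mat k m" and QQ: "ctrans Q * Q = 1\<^sub>m m"
  and A: "A \<in> carrier_mat m n"
  shows "frob2 (Q * A) = frob2 A"
proof -
  have QA: "Q * A \<in> carrier_mat k n" using Q A by auto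
  have "ctrans (Q * A) * (Q * A) = ctrans A * ((ctrans Q * Q) * A)"
    using ctrans_mult[OF Q A] Q A by (simp add: massoc)
  also have "\<dots> = ctrans A * A" using QQ A by simp
  finally have "complex_of_real (frob2 (Q * A)) = complex_of_real (frob2 A)"
    using frob2_tr[OF QA] frob2_tr[OF A] by simp
  thus ?thesis by simp
qed

lemma frob_right: assumes A: "A \<in> carrier_mat m n" and Q: "Q \<in> carrier_mat n k"
  and QQ: "Q * ctrans Q = 1\<^sub>m n"
  shows "frob2 (A * Q) = frob2 A"
proof -
  have AQ: "A * Q \<in> carrier_mat m k" using Q A by auto
  have "tr (ctrans (A * Q) * (A * Q)) = tr (ctrans Q * ((ctrans A * A) * Q))"
    using ctrans_mult[OF A Q] Q A by (simp add: massoc)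
  also have "\<dots> = tr (((ctrans A * A) * Q) * ctrans Q)"
    by (rule tr_comm[of _ k n]) (use A Q in auto)
  also have "\<dots> = tr (ctrans A * A)" using A Q QQ by (simp add: massoc)
  finally have "complex_of_real (frob2 (A * Q)) = complex_of_real (frob2 A)"
    using frob2_tr[OF AQ] frob2_tr[OF A] by simp
  thus ?thesis by simp
qed

definition fk :: "complex mat \<Rightarrow> real" where
  "fk U = frob2 U + frob2 (pinv U)"

lemma pen_norm: assumes "pen A X" "A \<in> carrier_mat m n"
  shows "X \<in> carrier_mat n m" "A * (X * A) = A" "X * (A * X) = X" "ctrans (A * X) = A * X" "ctrans (X * A) = X * A"
  using assms unfolding pen_def by (auto simp: massoc)

lemma kappa_left: assumes U: "U \<in> carrier_mat r n" and iU: "indep r n U"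
  and M: "M \<in> carrier_mat r' r" and MM: "ctrans M * M = 1\<^sub>m r"
  shows "fk (M * U) = fk U"
proof -
  obtain X where X: "pen U X" using full_row_pinv[OF U iU] by blast
  note XX = pen_norm[OF X U]
  have pX: "pinv U = X" by (rule pinv_eq[OF U X])
  have Mc: "ctrans M \<in> carrier_mat r r'" using M by auto
  have MMZ: "ctrans M * (M * Z) = Z" if "Z \<in> carrier_mat r k" for Z k
    using that M MM by (simp add: massoc[symmetric])
  have MU: "M * U \<in> carrier_mat r' n" using M U by auto
  have "pen (M * U) (X * ctrans M)" unfolding pen_def
  proof (intro conjI)
    show "X * ctrans M \<in> carrier_mat (dim_col (M * U)) (dim_row (M * U))" using XX M U by auto
    have "M * U * (X * ctrans M) * (M * U) = M * (U * (X * (ctrans M * (M * U))))"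
      using M U XX by (simp add: massoc)
    also have "\<dots> = M * U" using MMZ[OF U] XX by simp
    finally show "M * U * (X * ctrans M) * (M * U) = M * U" .
    have "X * ctrans M * (M * U) * (X * ctrans M) = X * ((ctrans M * (M * U)) * (X * ctrans M))"
      using M U XX by (simp add: massoc)
    also have "\<dots> = X * (U * (X * ctrans M))" using MMZ[OF U] by simp
    also have "\<dots> = (X * (U * X)) * ctrans M" using M U XX(1) by (simp add: massoc)
    also have "\<dots> = X * ctrans M" using XX by simp
    finally show "X * ctrans M * (M * U) * (X * ctrans M) = X * ctrans M" .
    have e1: "M * U * (X * ctrans M) = M * ((U * X) * ctrans M)" using M U XX by (simp add: massoc)
    have UXc: "U * X \<in> carrier_mat r r" using U XX by auto
    have "ctrans (M * ((U * X) * ctrans M)) = ctrans ((U * X) * ctrans M) * ctrans M"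
      by (rule ctrans_mult[OF M mult_carrier_mat[OF UXc Mc]])
    also have "ctrans ((U * X) * ctrans M) = M * ctrans (U * X)"
      using ctrans_mult[OF UXc Mc] by simp
    finally show "ctrans (M * U * (X * ctrans M)) = M * U * (X * ctrans M)"
      unfolding e1 using XX M U Mc UXc by (simp add: massoc)
    have "X * ctrans M * (M * U) = X * U" using MMZ[OF U] M U XX by (simp add: massoc)
    thus "ctrans (X * ctrans M * (M * U)) = X * ctrans M * (M * U)" using XX by simp
  qed
  hence pMU: "pinv (M * U) = X * ctrans M" by (rule pinv_eq[OF MU])
  have "frob2 (M * U) = frob2 U" by (rule frob_left[OF M MM U])
  moreover have "frob2 (X * ctrans M) = frob2 X"
    by (rule frob_right[OF XX(1) Mc]) (use MM in simp)
  ultimately show ?thesis unfolding fk_def pMU pX by simp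
qed

lemma kappa_right: assumes V: "V \<in> carrier_mat r m" and iV: "indep r m V"
  and Q: "Q \<in> carrier_mat m n" and QQ: "Q * ctrans Q = 1\<^sub>m m"
  shows "fk (V * Q) = fk V"
proof -
  obtain X where X: "pen V X" using full_row_pinv[OF V iV] by blast
  note XX = pen_norm[OF X V]
  have pX: "pinv V = X" by (rule pinv_eq[OF V X])
  have Qc: "ctrans Q \<in> carrier_mat n m" using Q by auto
  have QQZ: "Q * (ctrans Q * Z) = Z" if "Z \<in> carrier_mat m k" for Z k
    using that Q QQ Qc by (simp add: massoc[symmetric])
  have VQ: "V * Q \<in> carrier_mat r n" using V Q by auto
  have XVc: "X * V \<in> carrier_mat m m" using XX V by auto
  have "pen (V * Q) (ctrans Q * X)" unfolding pen_def
  proof (intro conjI)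
    show "ctrans Q * X \<in> carrier_mat (dim_col (V * Q)) (dim_row (V * Q))" using XX Q V by auto
    have "V * Q * (ctrans Q * X) * (V * Q) = V * (Q * (ctrans Q * (X * (V * Q))))"
      using V Q XX by (simp add: massoc)
    also have "\<dots> = V * (X * (V * Q))" using QQZ[of "X * (V * Q)" n] XX V Q by auto
    also have "\<dots> = (V * (X * V)) * Q" using V Q XX(1) by (simp add: massoc)
    also have "\<dots> = V * Q" using XX by simp
    finally show "V * Q * (ctrans Q * X) * (V * Q) = V * Q" .
    have "ctrans Q * X * (V * Q) * (ctrans Q * X) = ctrans Q * (X * (V * (Q * (ctrans Q * X))))"
      using V Q XX by (simp add: massoc)
    also have "\<dots> = ctrans Q * (X * (V * X))" using QQZ[OF XX(1)] by simp
    also have "\<dots> = ctrans Q * X" using XX by simp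
    finally show "ctrans Q * X * (V * Q) * (ctrans Q * X) = ctrans Q * X" .
    have e: "V * Q * (ctrans Q * X) = V * X" using QQZ[OF XX(1)] V Q XX(1) by (simp add: massoc)
    show "ctrans (V * Q * (ctrans Q * X)) = V * Q * (ctrans Q * X)" unfolding e using XX by simp
    have e2: "ctrans Q * X * (V * Q) = ctrans Q * ((X * V) * Q)" using V Q XX(1) by (simp add: massoc)
    have "ctrans (ctrans Q * ((X * V) * Q)) = ctrans ((X * V) * Q) * Q"
      using ctrans_mult[OF Qc mult_carrier_mat[OF XVc Q]] by simp
    also have "ctrans ((X * V) * Q) = ctrans Q * (X * V)"
      using ctrans_mult[OF XVc Q] XX by simp
    finally show "ctrans (ctrans Q * X * (V * Q)) = ctrans Q * X * (V * Q)"
      unfolding e2 using Qc XVc Q by (simp add: massoc)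
  qed
  hence pVQ: "pinv (V * Q) = ctrans Q * X" by (rule pinv_eq[OF VQ])
  have "frob2 (V * Q) = frob2 V" by (rule frob_right[OF V Q QQ])
  moreover have "frob2 (ctrans Q * X) = frob2 X"
    by (rule frob_left[OF Qc _ XX(1)]) (use QQ in simp)
  ultimately show ?thesis unfolding fk_def pVQ pX by simp
qed

lemma r_decomp_indep: "r_decomp n r T U \<Longrightarrow> indep r n U"
  unfolding r_decomp_def indep_def by blast

lemma kappa_eq: assumes d: "r_decomp n r T U" shows "kappa n T = fk U"
proof -
  define U1 where "U1 = (SOME U. \<exists>r. r_decomp n r T U)"
  have "\<exists>r. r_decomp n r T U" using d by blast
  hence "\<exists>r. r_decomp n r T U1" unfolding U1_def by (rule someI)
  then obtain r1 where d1: "r_decomp n r1 T U1" by blast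
  have U: "U \<in> carrier_mat r n" using d unfolding r_decomp_def by blast
  have U1: "U1 \<in> carrier_mat r1 n" using d1 unfolding r_decomp_def by blast
  have TU: "\<forall>a<n. \<forall>b<n. \<forall>c<n. T a b c = (\<Sum>i<r. U $$ (i,a) * U $$ (i,b) * U $$ (i,c))"
    using d unfolding r_decomp_def by blast
  have TU1: "\<forall>a<n. \<forall>b<n. \<forall>c<n. T a b c = (\<Sum>i<r1. U1 $$ (i,a) * U1 $$ (i,b) * U1 $$ (i,c))"
    using d1 unfolding r_decomp_def by blast
  obtain M where M: "M \<in> carrier_mat r1 r" "U1 = M * U" "ctrans M * M = 1\<^sub>m r"
    using decomp_unique[OF U r_decomp_indep[OF d] U1 r_decomp_indep[OF d1] TU TU1] by blast
  have "kappa n T = fk U1" unfolding kappa_def fk_def U1_def Let_def ..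
  also have "\<dots> = fk U" unfolding M(2) by (rule kappa_left[OF U r_decomp_indep[OF d] M(1) M(3)])
  finally show ?thesis .
qed

theorem theorem5p4:
  fixes n r :: nat and T :: "nat \<Rightarrow> nat \<Rightarrow> nat \<Rightarrow> complex" and U P :: "complex mat"
  assumes decomp: "r_decomp n r T U"
    and P_dim: "P \<in> carrier_mat n r"
    and P_semi_unitary: "ctrans P * P = 1\<^sub>m r"
    and P_span: "(\<lambda>x. P *\<^sub>v x) ` carrier_vec r = (\<lambda>c. transpose_mat U *\<^sub>v c) ` carrier_vec r"
  shows "diagonalisable r (tmul3 (conj_mat P) T) \<and> kappa n T = kappa r (tmul3 (conj_mat P) T)"
proof -
  have U: "U \<in> carrier_mat r n" using decomp unfolding r_decomp_def by blast
  have iU: "indep r n U" by (rule r_decomp_indep[OF decomp])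
  have TU: "\<forall>a<n. \<forall>b<n. \<forall>c<n. T a b c = (\<Sum>i<r. U $$ (i,a) * U $$ (i,b) * U $$ (i,c))"
    using decomp unfolding r_decomp_def by blast
  define V where "V = U * conj_mat P"
  define Q where "Q = transpose_mat P"
  have cP: "conj_mat P \<in> carrier_mat n r" using P_dim unfolding conj_mat_def by auto
  have V: "V \<in> carrier_mat r r" unfolding V_def using U cP by auto
  have Q: "Q \<in> carrier_mat r n" unfolding Q_def using P_dim by auto
  have Vij: "V $$ (i,a) = (\<Sum>k<n. U $$ (i,k) * cnj (P $$ (k,a)))" if "i < r" "a < r" for i a
    unfolding V_def conj_mat_def using that U P_dim
    by (auto simp: scalar_prod_def lessThan_atLeast0 intro!: sum.cong)
  have PP: "(\<Sum>k<n. cnj (P $$ (k,b)) * P $$ (k,a)) = (if b = a then 1 else 0)" if "a < r" "b < r" for a b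
  proof -
    have "(ctrans P * P) $$ (b,a) = (\<Sum>k<n. cnj (P $$ (k,b)) * P $$ (k,a))"
      using that P_dim by (auto simp: scalar_prod_def lessThan_atLeast0 intro!: sum.cong)
    thus ?thesis using P_semi_unitary that by simp
  qed
  have QQ: "Q * ctrans Q = 1\<^sub>m r"
  proof (rule eq_matI)
    fix a b assume "a < dim_row (1\<^sub>m r)" "b < dim_col (1\<^sub>m r)"
    hence a: "a < r" and b: "b < r" by auto
    have "(Q * ctrans Q) $$ (a,b) = (\<Sum>k<n. P $$ (k,a) * cnj (P $$ (k,b)))"
      unfolding Q_def using a b P_dim by (auto simp: scalar_prod_def lessThan_atLeast0 intro!: sum.cong)
    also have "\<dots> = (\<Sum>k<n. cnj (P $$ (k,b)) * P $$ (k,a))" by (simp add: mult.commute)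
    also have "\<dots> = 1\<^sub>m r $$ (a,b)" using PP[OF a b] a b by auto
    finally show "(Q * ctrans Q) $$ (a,b) = 1\<^sub>m r $$ (a,b)" .
  qed (use Q in auto)
  have fixU: "U $$ (i,c) = (\<Sum>a<r. P $$ (c,a) * (\<Sum>k<n. cnj (P $$ (k,a)) * U $$ (i,k)))"
    if i: "i < r" and c: "c < n" for i c
  proof -
    define u where "u = transpose_mat U *\<^sub>v unit_vec r i"
    have uk: "u $ k = U $$ (i,k)" if "k < n" for k
    proof -
      have "u $ k = (\<Sum>ia = 0..<r. U $$ (ia, k) * (if ia = i then 1 else 0))"
        unfolding u_def using U i that by (simp add: scalar_prod_def unit_vec_def)
      also have "\<dots> = (\<Sum>ia = 0..<r. if ia = i then U $$ (ia, k) else 0)" by (rule sum.cong) auto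
      also have "\<dots> = U $$ (i,k)" using i by simp
      finally show ?thesis .
    qed
    have "u \<in> (\<lambda>x. P *\<^sub>v x) ` carrier_vec r" unfolding P_span u_def by auto
    then obtain x where x: "x \<in> carrier_vec r" and ux: "u = P *\<^sub>v x" by blast
    have cPc: "ctrans P \<in> carrier_mat r n" using P_dim by auto
    have "P *\<^sub>v (ctrans P *\<^sub>v u) = P *\<^sub>v ((ctrans P * P) *\<^sub>v x)"
      unfolding ux by (simp add: assoc_mult_mat_vec[OF cPc P_dim x])
    also have "\<dots> = u" unfolding ux P_semi_unitary using x by simp
    finally have e: "P *\<^sub>v (ctrans P *\<^sub>v u) = u" .
    have u: "u \<in> carrier_vec n" unfolding u_def using U by (intro carrier_vecI) simp
    have "(P *\<^sub>v (ctrans P *\<^sub>v u)) $ c = (\<Sum>a<r. P $$ (c,a) * (\<Sum>k<n. cnj (P $$ (k,a)) * u $ k))"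
      using P_dim c u by (auto simp: scalar_prod_def lessThan_atLeast0 intro!: sum.cong)
    also have "\<dots> = (\<Sum>a<r. P $$ (c,a) * (\<Sum>k<n. cnj (P $$ (k,a)) * U $$ (i,k)))"
      using uk by simp
    finally show ?thesis using e uk[OF c] by simp
  qed
  have VQ: "V * Q = U"
  proof (rule eq_matI)
    fix i c assume "i < dim_row U" "c < dim_col U"
    hence i: "i < r" and c: "c < n" using U by auto
    have "(V * Q) $$ (i,c) = (\<Sum>a<r. V $$ (i,a) * P $$ (c,a))"
      unfolding Q_def using i c V P_dim by (auto simp: scalar_prod_def lessThan_atLeast0 intro!: sum.cong)
    also have "\<dots> = (\<Sum>a<r. P $$ (c,a) * (\<Sum>k<n. cnj (P $$ (k,a)) * U $$ (i,k)))"
      using Vij[OF i] by (auto simp: mult.commute intro!: sum.cong)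
    also have "\<dots> = U $$ (i,c)" using fixU[OF i c] by simp
    finally show "(V * Q) $$ (i,c) = U $$ (i,c)" .
  qed (use V Q U in auto)
  have iV: "indep r r V" unfolding indep_def
  proof (intro allI impI)
    fix cc :: "nat \<Rightarrow> complex" and i
    assume h: "\<forall>a<r. (\<Sum>i<r. cc i * V $$ (i,a)) = 0" and i: "i < r"
    have "\<forall>c<n. (\<Sum>i<r. cc i * U $$ (i,c)) = 0"
    proof (intro allI impI)
      fix c assume c: "c < n"
      have Uic: "U $$ (j,c) = (\<Sum>a<r. V $$ (j,a) * P $$ (c,a))" if "j < r" for j
      proof -
        have "U $$ (j,c) = (V * Q) $$ (j,c)" using VQ by simp
        also have "\<dots> = (\<Sum>a<r. V $$ (j,a) * P $$ (c,a))"
          unfolding Q_def using that c V P_dim by (auto simp: scalar_prod_def lessThan_atLeast0 intro!: sum.cong)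
        finally show ?thesis .
      qed
      have "(\<Sum>i<r. cc i * U $$ (i,c)) = (\<Sum>i<r. cc i * (\<Sum>a<r. V $$ (i,a) * P $$ (c,a)))"
        using Uic by simp
      also have "\<dots> = (\<Sum>i<r. \<Sum>a<r. cc i * V $$ (i,a) * P $$ (c,a))"
        by (simp only: sum_distrib_left mult.assoc)
      also have "\<dots> = (\<Sum>a<r. \<Sum>i<r. cc i * V $$ (i,a) * P $$ (c,a))"
        by (rule sum.swap)
      also have "\<dots> = (\<Sum>a<r. (\<Sum>i<r. cc i * V $$ (i,a)) * P $$ (c,a))"
        by (simp only: sum_distrib_right)
      also have "\<dots> = 0" using h by simp
      finally show "(\<Sum>i<r. cc i * U $$ (i,c)) = 0" .
    qed
    with iU i show "cc i = 0" unfolding indep_def by blast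
  qed
  have TV: "\<forall>a<r. \<forall>b<r. \<forall>c<r. tmul3 (conj_mat P) T a b c = (\<Sum>i<r. V $$ (i,a) * V $$ (i,b) * V $$ (i,c))"
  proof (intro allI impI)
    fix a b c assume a: "a < r" and b: "b < r" and c: "c < r"
    have "tmul3 (conj_mat P) T a b c = (\<Sum>j1<n. \<Sum>j2<n. \<Sum>j3<n.
        cnj (P $$ (j1,a)) * cnj (P $$ (j2,b)) * cnj (P $$ (j3,c)) * T j1 j2 j3)"
      unfolding tmul3_def using cP a b c P_dim by (auto simp: conj_mat_def intro!: sum.cong)
    also have "\<dots> = (\<Sum>i<r. (\<Sum>j1<n. cnj (P $$ (j1,a)) * U $$ (i,j1)) * (\<Sum>j2<n. cnj (P $$ (j2,b)) * U $$ (i,j2))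
        * (\<Sum>j3<n. cnj (P $$ (j3,c)) * U $$ (i,j3)))"
      by (rule contr3) (use TU in auto)
    also have "\<dots> = (\<Sum>i<r. V $$ (i,a) * V $$ (i,b) * V $$ (i,c))"
      using Vij a b c by (auto simp: mult.commute intro!: sum.cong)
    finally show "tmul3 (conj_mat P) T a b c = (\<Sum>i<r. V $$ (i,a) * V $$ (i,b) * V $$ (i,c))" .
  qed
  have dV: "r_decomp r r (tmul3 (conj_mat P) T) V"
    unfolding r_decomp_def using V iV TV unfolding indep_def by blast
  have "diagonalisable r (tmul3 (conj_mat P) T)"
    unfolding diagonalisable_def r_diagonalisable_def using dV by blast
  moreover have "kappa n T = kappa r (tmul3 (conj_mat P) T)"
  proof -
    have "kappa n T = fk U" by (rule kappa_eq[OF decomp])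
    also have "\<dots> = fk (V * Q)" using VQ by simp
    also have "\<dots> = fk V" by (rule kappa_right[OF V iV Q QQ])
    also have "\<dots> = kappa r (tmul3 (conj_mat P) T)" by (rule kappa_eq[OF dV, symmetric])
    finally show ?thesis .
  qed
  ultimately show ?thesis by blast
qed

end
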